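(* Let $n\ge2$, let $X\subset\mathbb{R}^n$ be finite with the Euclidean metric $d$, let $k\in\mathbb{N}$, $Y\subset X$ and $\epsilon>0$. Suppose $p\in C$ for some $C\in\mathcal{D}^*(Y,\epsilon)$ and $x\in Y\setminus C$. Then there exists $a\in(\partial C)^{\mathfrak{n}}_C\subset J(Y,\epsilon)$ such that $\rho^Y(a,x)\le\rho^Y(p,x)$.
   Context: DBSCAN$^*$: for $Y\subset X$, $\mathcal{C}(Y,\epsilon)=\{p\in Y:|\{y\in Y:d(p,y)\le\epsilon\}|>k\}$, $\mathcal{N}(Y,\epsilon)=Y\setminus\mathcal{C}(Y,\epsilon)$, and $\mathcal{D}^*(Y,\epsilon)$ is the set of vertex sets of the connected components of the graph with vertex set $\mathcal{C}(Y,\epsilon)$ and an edge between distinct $p,q$ whenever $d(p,q)\le\epsilon$. For $p\in Y$, $\operatorname{core}^Y_k(p)$ is the distance from $p$ to a $k$-th nearest neighbour of $p$ in $Y$ (the $k$-th smallest value of $d(p,y)$, $y\in Y\setminus\{p\}$, with multiplicity), and $\rho^Y(p,q)=\max\{\operatorname{core}^Y_k(p),\operatorname{core}^Y_k(q),d(p,q)\}$ for $p\neq q$, $\rho^Y(p,p)=0$. Cubes: $\mathcal{Q}=\mathcal{Q}(\epsilon)$ is the collection of closed cubes $\{x\in\mathbb{R}^n: j_i\frac{\epsilon}{2\sqrt n}\le x_i\le (j_i+1)\frac{\epsilon}{2\sqrt n}\}$, $j\in\mathbb{Z}^n$; $S^m=\{x:\max_i|x_i-s_i|\le m\frac{\epsilon}{2\sqrt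 n}\text{ for some }s\in S\}$; $\mathcal{I}(B)=\{S\in\mathcal{Q}:S\cap B\neq\emptyset\}$. For $A\subset X$, $S\in\mathcal{I}(A)$ is an interior cube of $A$ if $S^1\cap X\subset A$ and every $T\in\mathcal{Q}$ with $T\subset S^1$ lies in $\mathcal{I}(A)$, otherwise a boundary cube; $\partial A$ is the union of boundary cubes. For $Z\subset\mathbb{R}^n$ and integer $N\ge0$, $Z^N=\bigcup_{S\in\mathcal{I}(Z)}S^N$ and $Z^N_C=Z^N\cap C$. $\mathfrak{n}$ is the smallest integer with $\mathfrak{n}\ge\sqrt n-1$. $J(Y,\epsilon)=\bigcup_{C\in\mathcal{D}^*(Y,\epsilon)}(\partial C)^{\mathfrak{n}}_C\cup\mathcal{N}(Y,\epsilon)$. *)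

theory Defs
  imports "HOL-Analysis.Analysis" "HOL-Library.Multiset"
begin

definition core_points :: "nat \<Rightarrow> ('a::metric_space) set \<Rightarrow> real \<Rightarrow> 'a set" where
  "core_points k Y eps = {p \<in> Y. k < card {y \<in> Y. dist p y \<le> eps}}"

definition noise_points :: "nat \<Rightarrow> ('a::metric_space) set \<Rightarrow> real \<Rightarrow> 'a set" where
  "noise_points k Y eps = Y - core_points k Y eps"

definition core_edge :: "nat \<Rightarrow> ('a::metric_space) set \<Rightarrow> real \<Rightarrow> 'a \<Rightarrow> 'a \<Rightarrow> bool" where
  "core_edge k Y eps p q \<longleftrightarrow> p \<in> core_points k Y eps \<and> q \<in> core_points k Y eps \<and> p \<noteq> q \<and> dist p q \<le> eps"

definition dbscan_components :: "nat \<Rightarrow> ('a::metric_space) set \<Rightarrow> real \<Rightarrow> 'a set set" where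
  "dbscan_components k Y eps =
     {{q. (core_edge k Y eps)\<^sup>*\<^sup>* p q} | p. p \<in> core_points k Y eps}"

text \<open>k-th smallest value of d(p,y), y in Y - {p}, counted with multiplicity (k >= 1).\<close>
definition core_dist :: "nat \<Rightarrow> ('a::metric_space) set \<Rightarrow> 'a \<Rightarrow> real" where
  "core_dist k Y p =
     sorted_list_of_multiset (image_mset (dist p) (mset_set (Y - {p}))) ! (k - 1)"

definition mreach :: "nat \<Rightarrow> ('a::metric_space) set \<Rightarrow> 'a \<Rightarrow> 'a \<Rightarrow> real" where
  "mreach k Y p q =
     (if p = q then 0 else max (core_dist k Y p) (max (core_dist k Y q) (dist p q)))"

definition side :: "real \<Rightarrow> 'n::finite itself \<Rightarrow> real" where
  "side eps _ = eps / (2 * sqrt (real CARD('n)))"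

definition cube :: "real \<Rightarrow> int ^ 'n::finite \<Rightarrow> (real ^ 'n) set" where
  "cube eps j = {x. \<forall>i. real_of_int (j $ i) * side eps TYPE('n) \<le> x $ i
                        \<and> x $ i \<le> (real_of_int (j $ i) + 1) * side eps TYPE('n)}"

definition cubes :: "real \<Rightarrow> (real ^ 'n::finite) set set" where
  "cubes eps = range (cube eps)"

definition expand :: "real \<Rightarrow> nat \<Rightarrow> (real ^ 'n::finite) set \<Rightarrow> (real ^ 'n) set" where
  "expand eps m S = {x. \<exists>s \<in> S. \<forall>i. \<bar>x $ i - s $ i\<bar> \<le> real m * side eps TYPE('n)}"

definition meeting_cubes :: "real \<Rightarrow> (real ^ 'n::finite) set \<Rightarrow> (real ^ 'n) set set" where
  "meeting_cubes eps B = {S \<in> cubes eps. S \<inter> B \<noteq> {}}"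

definition interior_cube ::
  "(real ^ 'n::finite) set \<Rightarrow> real \<Rightarrow> (real ^ 'n) set \<Rightarrow> (real ^ 'n) set \<Rightarrow> bool" where
  "interior_cube X eps A S \<longleftrightarrow>
     S \<in> meeting_cubes eps A \<and> expand eps 1 S \<inter> X \<subseteq> A \<and>
     (\<forall>T \<in> cubes eps. T \<subseteq> expand eps 1 S \<longrightarrow> T \<in> meeting_cubes eps A)"

definition boundary_cube ::
  "(real ^ 'n::finite) set \<Rightarrow> real \<Rightarrow> (real ^ 'n) set \<Rightarrow> (real ^ 'n) set \<Rightarrow> bool" where
  "boundary_cube X eps A S \<longleftrightarrow> S \<in> meeting_cubes eps A \<and> \<not> interior_cube X eps A S"

definition cube_boundary :: "(real ^ 'n::finite) set \<Rightarrow> real \<Rightarrow> (real ^ 'n) set \<Rightarrow> (real ^ 'n) set" where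
  "cube_boundary X eps A = \<Union> {S. boundary_cube X eps A S}"

definition thicken :: "real \<Rightarrow> nat \<Rightarrow> (real ^ 'n::finite) set \<Rightarrow> (real ^ 'n) set" where
  "thicken eps N Z = (\<Union>S \<in> meeting_cubes eps Z. expand eps N S)"

text \<open>frak n: smallest integer >= sqrt n - 1 (nonnegative since n >= 1)\<close>
definition frak_n :: "'n::finite itself \<Rightarrow> nat" where
  "frak_n _ = nat \<lceil>sqrt (real CARD('n)) - 1\<rceil>"

definition J_set :: "nat \<Rightarrow> (real ^ 'n::finite) set \<Rightarrow> (real ^ 'n) set \<Rightarrow> real \<Rightarrow> (real ^ 'n) set" where
  "J_set k X Y eps =
     (\<Union>C \<in> dbscan_components k Y eps. thicken eps (frak_n TYPE('n)) (cube_boundary X eps C) \<inter> C)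
     \<union> noise_points k Y eps"

end

theory Submission
  imports Defs
begin


lemma sorted_nth_le_iff:
  fixes L :: "real list"
  assumes "sorted L" "i < length L"
  shows "L ! i \<le> e \<longleftrightarrow> i < length (filter (\<lambda>d. d \<le> e) L)"
proof -
  have tw: "takeWhile (\<lambda>d. d \<le> e) L = filter (\<lambda>d. d \<le> e) L"
  proof (rule takeWhile_eq_filter)
    fix x assume "x \<in> set (dropWhile (\<lambda>d. d \<le> e) L)"
    then obtain h t where ht: "dropWhile (\<lambda>d. d \<le> e) L = h # t"
      by (cases "dropWhile (\<lambda>d. d \<le> e) L") auto
    have "sorted (dropWhile (\<lambda>d. d \<le> e) L)"
      using assms(1) by (metis sorted_append takeWhile_dropWhile_id)
    hence "h \<le> x" using ht \<open>x \<in> _\<close> by auto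
    moreover have "\<not> h \<le> e" using ht hd_dropWhile by (metis list.distinct(1) list.sel(1))
    ultimately show "\<not> x \<le> e" by simp
  qed
  show ?thesis
  proof
    assume h: "L ! i \<le> e"
    show "i < length (filter (\<lambda>d. d \<le> e) L)"
    proof (rule ccontr)
      assume "\<not> ?thesis"
      hence le: "length (takeWhile (\<lambda>d. d \<le> e) L) \<le> i" using tw by simp
      hence "length (takeWhile (\<lambda>d. d \<le> e) L) < length L" using assms(2) by simp
      hence "\<not> L ! length (takeWhile (\<lambda>d. d \<le> e) L) \<le> e" by (rule nth_length_takeWhile)
      moreover have "L ! length (takeWhile (\<lambda>d. d \<le> e) L) \<le> L ! i"
        using assms le by (simp add: sorted_nth_mono)
      ultimately show False using h by simp
    qed
  next
    assume "i < length (filter (\<lambda>d. d \<le> e) L)"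
    hence "i < length (takeWhile (\<lambda>d. d \<le> e) L)" using tw by simp
    thus "L ! i \<le> e" using nth_mem set_takeWhileD takeWhile_nth by metis
  qed
qed

lemma core_dist_le_iff:
  fixes Y :: "('a::metric_space) set"
  assumes "finite Y" "k \<ge> 1" "k < card Y" "a \<in> Y"
  shows "core_dist k Y a \<le> e \<longleftrightarrow> k \<le> card {y \<in> Y - {a}. dist a y \<le> e}"
proof -
  let ?M = "image_mset (dist a) (mset_set (Y - {a}))"
  let ?L = "sorted_list_of_multiset ?M"
  have len: "length ?L = card Y - 1"
    by (metis assms(1,4) card_Diff_singleton mset_sorted_list_of_multiset size_image_mset size_mset size_mset_set)
  have flt: "length (filter (\<lambda>d. d \<le> e) ?L) = card {y \<in> Y - {a}. dist a y \<le> e}"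
  proof -
    have "length (filter (\<lambda>d. d \<le> e) ?L) = size (filter_mset (\<lambda>d. d \<le> e) ?M)"
      by (metis mset_filter mset_sorted_list_of_multiset size_mset)
    also have "\<dots> = card {y \<in> Y - {a}. dist a y \<le> e}"
      using assms(1) by (simp add: filter_mset_image_mset)
    finally show ?thesis .
  qed
  have "core_dist k Y a = ?L ! (k - 1)" by (simp add: core_dist_def)
  moreover have "k - 1 < length ?L" using len assms by simp
  ultimately show ?thesis using sorted_nth_le_iff[of ?L "k-1" e] flt assms(2) by auto
qed



lemma side_pos: "eps > 0 \<Longrightarrow> side eps TYPE('n::finite) > 0"
  by (simp add: side_def)

lemma mem_cube: fixes y :: "real^'n::finite" shows "y \<in> cube eps j \<longleftrightarrow> (\<forall>i. of_int (j$i) * side eps TYPE('n) \<le> y$i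
    \<and> y$i \<le> (of_int (j$i) + 1) * side eps TYPE('n))"
  by (simp add: cube_def)

definition fidx :: "real \<Rightarrow> real ^ 'n::finite \<Rightarrow> int ^ 'n" where
  "fidx eps y = (\<chi> i. \<lfloor>y$i / side eps TYPE('n)\<rfloor>)"

lemma floor_mult_le: "s > 0 \<Longrightarrow> of_int \<lfloor>u / s\<rfloor> * s \<le> (u::real) \<and> u \<le> (of_int \<lfloor>u / s\<rfloor> + 1) * s"
proof -
  assume s: "s > 0"
  have "of_int \<lfloor>u / s\<rfloor> \<le> u / s" "u / s \<le> of_int \<lfloor>u / s\<rfloor> + 1" by linarith+
  hence h: "of_int \<lfloor>u / s\<rfloor> * s \<le> u / s * s" "u / s * s \<le> (of_int \<lfloor>u / s\<rfloor> + 1) * s"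
    using s by (intro mult_right_mono; simp)+
  have e: "u / s * s = u" using s by simp
  show ?thesis using h e by linarith
qed

lemma in_fidx: fixes y :: "real^'n::finite" assumes "eps > 0" shows "y \<in> cube eps (fidx eps y)"
proof -
  have "side eps TYPE('n) > 0" using assms by (rule side_pos)
  thus ?thesis using floor_mult_le by (simp add: mem_cube fidx_def)
qed

lemma clamp_close:
  fixes s y :: real and j j' m :: int
  assumes "s > 0" "of_int j' * s \<le> y" "y \<le> (of_int j' + 1) * s" "\<bar>j' - j\<bar> \<le> m"
  shows "\<bar>y - max (of_int j * s) (min ((of_int j + 1) * s) y)\<bar> \<le> of_int m * s"
proof -
  have m0: "0 \<le> m" using assms(4) by linarith
  have a0: "of_int (j' - j) * s \<le> of_int m * s" "of_int (j - j') * s \<le> of_int m * s"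
    using assms(1,4) by (intro mult_right_mono; simp add: abs_le_iff)+
  have a: "of_int j' * s - of_int j * s \<le> of_int m * s" "of_int j * s - of_int j' * s \<le> of_int m * s"
    using a0 by (simp_all add: algebra_simps)
  have b: "0 \<le> of_int m * s" using m0 assms(1) by simp
  have c: "of_int (j' - j) * s = of_int j' * s - of_int j * s" "of_int (j - j') * s = of_int j * s - of_int j' * s"
    by (simp_all add: algebra_simps)
  have d: "(of_int j + 1) * s = of_int j * s + s" "(of_int j' + 1) * s = of_int j' * s + s"
    by (simp_all add: algebra_simps)
  show ?thesis
  proof (cases "y < of_int j * s")
    case True
    hence e: "max (of_int j * s) (min ((of_int j + 1) * s) y) = of_int j * s" using assms(1) d by simp
    show ?thesis unfolding e abs_le_iff using True a assms(2) b by linarith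
  next
    case False
    show ?thesis
    proof (cases "y > (of_int j + 1) * s")
      case True
      have m1: "min ((of_int j + 1) * s) y = (of_int j + 1) * s" using True by simp
      have m2: "of_int j * s \<le> (of_int j + 1) * s" using d assms(1) by linarith
      have e: "max (of_int j * s) (min ((of_int j + 1) * s) y) = (of_int j + 1) * s" 
        unfolding m1 using m2 by simp
      show ?thesis unfolding e abs_le_iff using True a d assms(3) b by linarith
    next
      case F2: False
      hence "max (of_int j * s) (min ((of_int j + 1) * s) y) = y" using False by simp
      thus ?thesis using b by simp
    qed
  qed
qed

lemma cube_sub_expand:
  fixes j j' :: "int ^ 'n::finite"
  assumes "eps > 0" "\<forall>i. \<bar>j'$i - j$i\<bar> \<le> int m"
  shows "cube eps j' \<subseteq> expand eps m (cube eps j)"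
proof
  fix y assume y: "y \<in> cube eps j'"
  let ?s = "side eps TYPE('n)"
  define q where "q = (\<chi> i. max (of_int (j$i) * ?s) (min ((of_int (j$i) + 1) * ?s) (y$i)))"
  have s: "?s > 0" using assms side_pos by blast
  have "q \<in> cube eps j" unfolding mem_cube q_def using s
    by (auto simp: algebra_simps)
  moreover have "\<forall>i. \<bar>y$i - q$i\<bar> \<le> real m * ?s"
  proof
    fix i
    have "of_int (j'$i) * ?s \<le> y$i" "y$i \<le> (of_int (j'$i) + 1) * ?s" using y unfolding mem_cube by auto
    from clamp_close[OF s this, of "j$i" "int m"] assms(2)
    show "\<bar>y$i - q$i\<bar> \<le> real m * ?s" unfolding q_def by simp
  qed
  ultimately show "y \<in> expand eps m (cube eps j)" unfolding expand_def by blast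
qed

lemma cube_inter:
  fixes j j' :: "int ^ 'n::finite"
  assumes "eps > 0" "\<forall>i. \<bar>j'$i - j$i\<bar> \<le> 1"
  shows "cube eps j \<inter> cube eps j' \<noteq> {}"
proof -
  let ?s = "side eps TYPE('n)"
  have s: "?s > 0" using assms side_pos by blast
  define q :: "real^'n" where "q = (\<chi> i. of_int (max (j$i) (j'$i)) * ?s)"
  have "q \<in> cube eps j \<and> q \<in> cube eps j'"
    unfolding mem_cube
  proof (intro conjI allI)
    fix i
    have a0: "j'$i \<le> j$i + 1" "j$i \<le> j'$i + 1" using assms(2)[rule_format, of i] by (auto simp: abs_le_iff)
    have a: "of_int (j'$i) \<le> of_int (j$i) + (1::real)" "of_int (j$i) \<le> of_int (j'$i) + (1::real)"
      using a0 by linarith+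
    have b: "of_int (max (j$i) (j'$i)) * ?s \<le> (of_int (j$i) + 1) * ?s"
         "of_int (max (j$i) (j'$i)) * ?s \<le> (of_int (j'$i) + 1) * ?s"
      using a s by (intro mult_right_mono; simp add: max_def)+
    have c: "of_int (j$i) * ?s \<le> of_int (max (j$i) (j'$i)) * ?s"
         "of_int (j'$i) * ?s \<le> of_int (max (j$i) (j'$i)) * ?s"
      using s by (intro mult_right_mono; simp)+
    show "of_int (j$i) * ?s \<le> q$i" "q$i \<le> (of_int (j$i) + 1) * ?s"
      "of_int (j'$i) * ?s \<le> q$i" "q$i \<le> (of_int (j'$i) + 1) * ?s"
      using b c unfolding q_def by simp_all
  qed
  thus ?thesis by blast
qed

lemma cube_diam:
  fixes w z :: "real ^ 'n::finite"
  assumes "w \<in> cube eps j" "z \<in> cube eps j"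
  shows "dist w z \<le> sqrt (real CARD('n)) * side eps TYPE('n)"
proof -
  let ?s = "side eps TYPE('n)"
  have "\<forall>i. \<bar>w$i - z$i\<bar> \<le> ?s"
  proof
    fix i
    have "of_int (j$i) * ?s \<le> w$i" "w$i \<le> (of_int (j$i) + 1) * ?s"
         "of_int (j$i) * ?s \<le> z$i" "z$i \<le> (of_int (j$i) + 1) * ?s"
      using assms unfolding mem_cube by auto
    moreover have "(of_int (j$i) + 1) * ?s = of_int (j$i) * ?s + ?s" by (simp add: algebra_simps)
    ultimately show "\<bar>w$i - z$i\<bar> \<le> ?s" by linarith
  qed
  hence l0: "L2_set (\<lambda>i. norm ((w - z) $ i)) (UNIV::'n set) \<le> L2_set (\<lambda>i. ?s) (UNIV::'n set)"
    by (intro L2_set_mono) auto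
  hence l: "norm (w - z) \<le> L2_set (\<lambda>i. ?s) (UNIV::'n set)" by (simp add: norm_vec_def)
  moreover have "?s \<ge> 0" using assms(1) unfolding mem_cube by (metis distrib_right mult_1 le_add_same_cancel1 order.trans)
  ultimately show ?thesis using l by (simp add: dist_norm L2_set_constant)
qed



definition sb :: "int^'n::finite \<Rightarrow> int^'n \<Rightarrow> int^'n" where
  "sb j0 j = (\<chi> i. if j$i > j0$i then j$i - 1 else if j$i < j0$i then j$i + 1 else j$i)"

lemma sb1: assumes "\<forall>i. \<bar>j$i - j0$i\<bar> \<le> int d + 1" shows "\<forall>i. \<bar>sb j0 j $ i - j0$i\<bar> \<le> int d"
proof
  fix i
  have h: "j$i - j0$i \<le> int d + 1" "j0$i - j$i \<le> int d + 1" using assms[rule_format, of i] by (simp_all add: abs_le_iff)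
  show "\<bar>sb j0 j $ i - j0$i\<bar> \<le> int d" unfolding sb_def using h by (simp add: abs_le_iff)
qed

lemma sb2: "\<forall>i. \<bar>j$i - sb j0 j $ i\<bar> \<le> 1"
  unfolding sb_def by auto

lemma floor_close: "\<bar>u - v\<bar> \<le> real m \<Longrightarrow> \<bar>\<lfloor>u\<rfloor> - \<lfloor>v\<rfloor>\<bar> \<le> int m"
proof -
  assume h: "\<bar>u - v\<bar> \<le> real m"
  have f: "of_int \<lfloor>u\<rfloor> \<le> u" "u < of_int \<lfloor>u\<rfloor> + 1" "of_int \<lfloor>v\<rfloor> \<le> v" "v < of_int \<lfloor>v\<rfloor> + 1"
    by linarith+
  have h': "u - v \<le> real m" "v - u \<le> real m" using h by (simp_all add: abs_le_iff)
  have g: "real_of_int \<lfloor>u\<rfloor> - real_of_int \<lfloor>v\<rfloor> < real m + 1" "real_of_int \<lfloor>v\<rfloor> - real_of_int \<lfloor>u\<rfloor> < real m + 1"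
    using f h' by linarith+
  have "real_of_int (\<lfloor>u\<rfloor> - \<lfloor>v\<rfloor>) < real_of_int (int m + 1)" "real_of_int (\<lfloor>v\<rfloor> - \<lfloor>u\<rfloor>) < real_of_int (int m + 1)"
    using g by simp_all
  hence "\<lfloor>u\<rfloor> - \<lfloor>v\<rfloor> < int m + 1" "\<lfloor>v\<rfloor> - \<lfloor>u\<rfloor> < int m + 1" by (simp_all only: of_int_less_iff)
  thus ?thesis by (simp add: abs_le_iff)
qed

lemma fidx_close:
  fixes a y :: "real^'n::finite"
  assumes "eps > 0" "\<forall>i. \<bar>y$i - a$i\<bar> \<le> real m * side eps TYPE('n)"
  shows "\<forall>i. \<bar>fidx eps y $ i - fidx eps a $ i\<bar> \<le> int m"
proof
  fix i
  let ?s = "side eps TYPE('n)"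
  have s: "?s > 0" using assms(1) by (rule side_pos)
  have "\<bar>y$i / ?s - a$i / ?s\<bar> = \<bar>y$i - a$i\<bar> / ?s" using s by (simp add: diff_divide_distrib[symmetric])
  also have "\<dots> \<le> real m" using assms(2) s by (simp add: pos_divide_le_eq)
  finally show "\<bar>fidx eps y $ i - fidx eps a $ i\<bar> \<le> int m"
    unfolding fidx_def using floor_close by simp
qed

lemma descent:
  fixes X C :: "(real^'n::finite) set" and a x :: "real^'n" and N :: nat
  assumes eps: "eps > 0" and aC: "a \<in> C" and xX: "x \<in> X" and xC: "x \<notin> C"
    and na: "a \<notin> thicken eps N (cube_boundary X eps C)"
    and sq: "sqrt (real CARD('n)) \<le> real N + 1"
  shows "\<exists>w\<in>C. dist w x < dist a x"
proof -
  let ?s = "side eps TYPE('n)"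
  have s: "?s > 0" using eps by (rule side_pos)
  define j0 where "j0 = fidx eps a"
  have a0: "a \<in> cube eps j0" unfolding j0_def using eps by (rule in_fidx)
  have incubes: "\<And>j. cube eps j \<in> cubes eps" unfolding cubes_def by simp
  have nb: "\<not> boundary_cube X eps C (cube eps j)" if hj: "\<forall>i. \<bar>j$i - j0$i\<bar> \<le> int N + 1" for j
  proof
    assume bd: "boundary_cube X eps C (cube eps j)"
    define jb where "jb = sb j0 j"
    have jb0: "\<forall>i. \<bar>jb$i - j0$i\<bar> \<le> int N" unfolding jb_def using sb1 hj by blast
    have "cube eps jb \<inter> cube eps j \<noteq> {}" using cube_inter[OF eps, of j jb] sb2[of j j0] unfolding jb_def by blast
    moreover have "cube eps j \<subseteq> cube_boundary X eps C" unfolding cube_boundary_def using bd by blast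
    ultimately have "cube eps jb \<in> meeting_cubes eps (cube_boundary X eps C)"
      unfolding meeting_cubes_def using incubes by blast
    moreover have "a \<in> expand eps N (cube eps jb)"
      using cube_sub_expand[OF eps, of j0 jb N] jb0 a0 by (auto simp: abs_minus_commute)
    ultimately have "a \<in> thicken eps N (cube_boundary X eps C)" unfolding thicken_def by blast
    thus False using na by blast
  qed
  have intr: "interior_cube X eps C (cube eps j)"
    if "\<forall>i. \<bar>j$i - j0$i\<bar> \<le> int N + 1" "cube eps j \<in> meeting_cubes eps C" for j
    using nb[OF that(1)] that(2) unfolding boundary_cube_def by blast
  have meet: "\<forall>j. (\<forall>i. \<bar>j$i - j0$i\<bar> \<le> int d) \<longrightarrow> cube eps j \<in> meeting_cubes eps C"
    if "d \<le> N + 2" for d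
    using that
  proof (induction d)
    case 0
    show ?case
    proof (intro allI impI)
      fix j :: "int^'n" assume "\<forall>i. \<bar>j$i - j0$i\<bar> \<le> int 0"
      hence "j = j0" by (simp add: vec_eq_iff)
      thus "cube eps j \<in> meeting_cubes eps C" using a0 aC incubes unfolding meeting_cubes_def by blast
    qed
  next
    case (Suc d)
    show ?case
    proof (intro allI impI)
      fix j :: "int^'n" assume hj: "\<forall>i. \<bar>j$i - j0$i\<bar> \<le> int (Suc d)"
      define jb where "jb = sb j0 j"
      have hj': "\<forall>i. \<bar>j$i - j0$i\<bar> \<le> int d + 1" using hj by (simp add: add.commute)
      have jb0: "\<forall>i. \<bar>jb$i - j0$i\<bar> \<le> int d" unfolding jb_def using sb1[OF hj'] .
      have m: "cube eps jb \<in> meeting_cubes eps C" using Suc jb0 by simp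
      have "\<forall>i. \<bar>jb$i - j0$i\<bar> \<le> int N + 1" 
      proof
        fix i show "\<bar>jb$i - j0$i\<bar> \<le> int N + 1" using jb0[rule_format, of i] Suc.prems by linarith
      qed
      hence "interior_cube X eps C (cube eps jb)" using intr m by blast
      hence all: "\<forall>T\<in>cubes eps. T \<subseteq> expand eps 1 (cube eps jb) \<longrightarrow> T \<in> meeting_cubes eps C"
        unfolding interior_cube_def by blast
      have "cube eps j \<subseteq> expand eps 1 (cube eps jb)"
        using cube_sub_expand[OF eps, of j jb 1] sb2[of j j0] unfolding jb_def by simp
      thus "cube eps j \<in> meeting_cubes eps C" using all incubes by blast
    qed
  qed
  have xnot: "x \<notin> cube eps j" if hj: "\<forall>i. \<bar>j$i - j0$i\<bar> \<le> int N + 2" for j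
  proof
    assume xj: "x \<in> cube eps j"
    define jb where "jb = sb j0 j"
    have hj': "\<forall>i. \<bar>j$i - j0$i\<bar> \<le> int (N + 1) + 1" using hj by (simp add: add.commute)
    have jb0: "\<forall>i. \<bar>jb$i - j0$i\<bar> \<le> int (N + 1)" unfolding jb_def using sb1[OF hj'] .
    have m: "cube eps jb \<in> meeting_cubes eps C" using meet[of "N+1"] jb0 by simp
    have "interior_cube X eps C (cube eps jb)" using intr m jb0 by (simp add: add.commute)
    hence sub: "expand eps 1 (cube eps jb) \<inter> X \<subseteq> C" unfolding interior_cube_def by blast
    have "cube eps j \<subseteq> expand eps 1 (cube eps jb)"
      using cube_sub_expand[OF eps, of j jb 1] sb2[of j j0] unfolding jb_def by simp
    thus False using sub xj xX xC by blast
  qed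
  define t where "t = (real N + 2) * ?s"
  define r where "r = dist a x"
  have rt: "r > t"
  proof (rule ccontr)
    assume "\<not> r > t"
    hence "\<forall>i. \<bar>x$i - a$i\<bar> \<le> real (N + 2) * ?s"
      unfolding r_def t_def dist_norm
      by (metis (no_types, opaque_lifting) component_le_norm_cart norm_minus_commute of_nat_add of_nat_numeral order_trans not_less vector_minus_component)
    hence "\<forall>i. \<bar>fidx eps x $ i - j0$i\<bar> \<le> int (N + 2)" unfolding j0_def by (rule fidx_close[OF eps])
    hence "x \<notin> cube eps (fidx eps x)" using xnot by (simp add: add.commute)
    thus False using in_fidx[OF eps] by blast
  qed
  have t0: "t > 0" unfolding t_def using s by simp
  define z where "z = a + (t / r) *\<^sub>R (x - a)"
  have ax: "a \<noteq> x" using rt t0 unfolding r_def by auto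
  have za: "norm (z - a) = t" unfolding z_def using rt t0 ax by (simp add: r_def dist_norm norm_minus_commute)
  have zx: "dist z x = r - t"
  proof -
    have "x - z = (1 - t / r) *\<^sub>R (x - a)" unfolding z_def by (simp add: algebra_simps)
    moreover have "t / r < 1" using rt t0 by simp
    ultimately have "norm (x - z) = (1 - t / r) * r" using rt t0 by (simp add: r_def dist_norm norm_minus_commute)
    also have "\<dots> = r - t" using rt t0 by (simp add: field_simps)
    finally show ?thesis by (simp add: dist_norm norm_minus_commute)
  qed
  have "\<forall>i. \<bar>z$i - a$i\<bar> \<le> real (N + 2) * ?s"
    using za component_le_norm_cart unfolding t_def
    by (metis of_nat_add of_nat_numeral vector_minus_component)
  hence "\<forall>i. \<bar>fidx eps z $ i - j0$i\<bar> \<le> int (N + 2)" unfolding j0_def by (rule fidx_close[OF eps])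
  hence "cube eps (fidx eps z) \<in> meeting_cubes eps C" using meet[of "N+2"] by (simp add: add.commute)
  then obtain w where w: "w \<in> cube eps (fidx eps z)" "w \<in> C" unfolding meeting_cubes_def by blast
  have "dist w z \<le> sqrt (real CARD('n)) * ?s" using cube_diam[OF w(1) in_fidx[OF eps]] .
  also have "\<dots> < t" unfolding t_def using sq s by (intro mult_strict_right_mono) auto
  finally have "dist w x < r"
    using dist_triangle[of w x z] zx by linarith
  thus ?thesis using w(2) unfolding r_def by blast
qed



lemma rt_core:
  assumes "(core_edge k Y eps)\<^sup>*\<^sup>* p0 q" "p0 \<in> core_points k Y eps"
  shows "q \<in> core_points k Y eps"
  using assms by (induction rule: rtranclp_induct) (auto simp: core_edge_def)

lemma core_card:
  fixes Y :: "('a::metric_space) set"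
  assumes "finite Y" "a \<in> Y" "eps \<ge> 0"
  shows "card {y \<in> Y - {a}. dist a y \<le> eps} = card {y \<in> Y. dist a y \<le> eps} - 1"
proof -
  have "{y \<in> Y - {a}. dist a y \<le> eps} = {y \<in> Y. dist a y \<le> eps} - {a}" by auto
  moreover have "a \<in> {y \<in> Y. dist a y \<le> eps}" using assms by simp
  ultimately show ?thesis using assms(1) by (simp add: card_Diff_singleton)
qed

theorem corollary5p5:
  fixes X Y C :: "(real ^ 'n::finite) set" and k :: nat and eps :: real and p x :: "real ^ 'n"
  assumes "CARD('n) \<ge> 2"
    and "finite X" and "Y \<subseteq> X" and "k \<ge> 1" and "eps > 0"
    and "C \<in> dbscan_components k Y eps" and "p \<in> C" and "x \<in> Y - C"
  shows "thicken eps (frak_n TYPE('n)) (cube_boundary X eps C) \<inter> C \<subseteq> J_set k X Y eps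
       \<and> (\<exists>a \<in> thicken eps (frak_n TYPE('n)) (cube_boundary X eps C) \<inter> C.
             mreach k Y a x \<le> mreach k Y p x)"
proof
  let ?T = "thicken eps (frak_n TYPE('n)) (cube_boundary X eps C)"
  show "?T \<inter> C \<subseteq> J_set k X Y eps" unfolding J_set_def using assms(6) by blast
  obtain p0 where p0: "p0 \<in> core_points k Y eps" and Cdef: "C = {q. (core_edge k Y eps)\<^sup>*\<^sup>* p0 q}"
    using assms(6) unfolding dbscan_components_def by blast
  have Ccore: "C \<subseteq> core_points k Y eps" using rt_core p0 Cdef by blast
  have finY: "finite Y" using assms(2,3) finite_subset by blast
  have Ccp: "C \<subseteq> Y" using Ccore unfolding core_points_def by blast
  have finC: "finite C" using finY Ccp finite_subset by blast
  have xY: "x \<in> Y" and xC: "x \<notin> C" using assms(8) by auto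
  have xX: "x \<in> X" using xY assms(3) by blast
  obtain a where aC: "a \<in> C" and amin: "\<forall>c\<in>C. dist a x \<le> dist c x"
  proof -
    have ne: "(\<lambda>c. dist c x) ` C \<noteq> {}" using assms(7) by blast
    have fin: "finite ((\<lambda>c. dist c x) ` C)" using finC by simp
    obtain a where "a \<in> C" "dist a x = Min ((\<lambda>c. dist c x) ` C)"
      using Min_in[OF fin ne] by auto
    moreover have "\<forall>c\<in>C. Min ((\<lambda>c. dist c x) ` C) \<le> dist c x" using fin by simp
    ultimately show ?thesis using that by auto
  qed
  have sq: "sqrt (real CARD('n)) \<le> real (frak_n TYPE('n)) + 1"
  proof -
    have "sqrt (real CARD('n)) \<ge> 1" by simp
    hence "\<lceil>sqrt (real CARD('n)) - 1\<rceil> \<ge> 0" by simp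
    moreover have "sqrt (real CARD('n)) - 1 \<le> of_int \<lceil>sqrt (real CARD('n)) - 1\<rceil>" by (rule le_of_int_ceiling)
    ultimately show ?thesis unfolding frak_n_def by simp
  qed
  have aT: "a \<in> ?T"
  proof (rule ccontr)
    assume "a \<notin> ?T"
    from descent[OF assms(5) aC xX xC this sq] obtain w where "w \<in> C" "dist w x < dist a x" by blast
    thus False using amin by fastforce
  qed
  have aY: "a \<in> Y" using aC Ccp by blast
  have acore: "a \<in> core_points k Y eps" using aC Ccore by blast
  hence acard: "k < card {y \<in> Y. dist a y \<le> eps}" unfolding core_points_def by blast
  have cardY: "k < card Y"
    using acard card_mono[OF finY, of "{y \<in> Y. dist a y \<le> eps}"] by auto
  have coreA: "core_dist k Y a \<le> eps"
    using core_dist_le_iff[OF finY assms(4) cardY aY] core_card[OF finY aY] assms(5) acard by simp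
  have pxne: "p \<noteq> x" "a \<noteq> x" using assms(7) xC aC by auto
  have big: "mreach k Y p x > eps"
  proof (cases "x \<in> core_points k Y eps")
    case True
    have "dist p x > eps"
    proof (rule ccontr)
      assume "\<not> dist p x > eps"
      hence "core_edge k Y eps p x" using True assms(7) Ccore pxne unfolding core_edge_def by auto
      moreover have "(core_edge k Y eps)\<^sup>*\<^sup>* p0 p" using assms(7) Cdef by blast
      ultimately have "x \<in> C" using Cdef by (auto intro: rtranclp.rtrancl_into_rtrancl)
      thus False using xC by blast
    qed
    thus ?thesis unfolding mreach_def using pxne by simp
  next
    case False
    hence "card {y \<in> Y. dist x y \<le> eps} \<le> k" using xY unfolding core_points_def by auto
    hence "\<not> k \<le> card {y \<in> Y - {x}. dist x y \<le> eps}"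
      using core_card[OF finY xY] assms(4,5) by simp
    hence "core_dist k Y x > eps" using core_dist_le_iff[OF finY assms(4) cardY xY, of eps] by linarith
    thus ?thesis unfolding mreach_def using pxne by simp
  qed
  have "mreach k Y a x \<le> mreach k Y p x"
  proof -
    have "dist a x \<le> dist p x" using amin assms(7) by blast
    thus ?thesis using coreA big pxne unfolding mreach_def by auto
  qed
  thus "\<exists>a \<in> ?T \<inter> C. mreach k Y a x \<le> mreach k Y p x" using aT aC by blast
qed


end
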